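(* Let $a\in C^2([0,T]\times[-\pi,\pi])$ solve $$\partial_t a+\Big(\int_{-\pi}^x a(t,\bar x)\,d\bar x\Big)\partial_x a-a^2+\frac1\pi\int_{-\pi}^{\pi}a^2\,dx=0,\qquad \int_{-\pi}^\pi a(t,x)dx=0,$$ and set $a_0=a(0,\cdot)$. Assume $\partial_x a_0(x_0^* )=0$ at some point $x_0^*$. Then for all $t\in[0,T]$, $\partial_x^2a(t,x^*(t))=\partial_x^2a_0(x_0^* )$, where $x^*$ is the characteristic starting from $x_0^*$.
   Context: The characteristic starting from $x_0^*$ is the solution of $\frac{d}{dt}x^*(t)=\int_{-\pi}^{x^*(t)}a(t,x)\,dx$, $x^*(0)=x_0^*$. *)

theory Defs
  imports "HOL-Analysis.Analysis"
begin

definition rect :: "real \<Rightarrow> (real \<times> real) set" where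
  "rect T = {0..T} \<times> {-pi..pi}"

text \<open>Derivatives are Frechet derivatives relative to S
  (one-sided at the boundary); all second order partials exist and are continuous on S.\<close>
definition C2_on :: "(real \<Rightarrow> real \<Rightarrow> real) \<Rightarrow> (real \<Rightarrow> real \<Rightarrow> real) \<Rightarrow>
    (real \<Rightarrow> real \<Rightarrow> real) \<Rightarrow> (real \<Rightarrow> real \<Rightarrow> real) \<Rightarrow> (real \<times> real) set \<Rightarrow> bool" where
  "C2_on a a_t a_x a_xx S \<longleftrightarrow>
     (\<forall>p\<in>S. ((\<lambda>q. a (fst q) (snd q)) has_derivative
               (\<lambda>h. a_t (fst p) (snd p) * fst h + a_x (fst p) (snd p) * snd h)) (at p within S)) \<and>
     (\<exists>a_tt a_tx a_xt.
        (\<forall>p\<in>S. ((\<lambda>q. a_t (fst q) (snd q)) has_derivative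
               (\<lambda>h. a_tt (fst p) (snd p) * fst h + a_tx (fst p) (snd p) * snd h)) (at p within S)) \<and>
        (\<forall>p\<in>S. ((\<lambda>q. a_x (fst q) (snd q)) has_derivative
               (\<lambda>h. a_xt (fst p) (snd p) * fst h + a_xx (fst p) (snd p) * snd h)) (at p within S)) \<and>
        continuous_on S (\<lambda>q. a_tt (fst q) (snd q)) \<and>
        continuous_on S (\<lambda>q. a_tx (fst q) (snd q)) \<and>
        continuous_on S (\<lambda>q. a_xt (fst q) (snd q)) \<and>
        continuous_on S (\<lambda>q. a_xx (fst q) (snd q)))"

end

theory Submission
  imports Defs
begin

lemma mvt_between:
  fixes f f' :: "real \<Rightarrow> real"
  assumes D: "\<And>y. y \<in> {c..d} \<Longrightarrow> (f has_real_derivative f' y) (at y within {c..d})"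
    and x: "x \<in> {c..d}" and y: "y \<in> {c..d}"
  shows "\<exists>\<xi>\<in>{c..d}. \<bar>\<xi> - x\<bar> \<le> \<bar>y - x\<bar> \<and> f y - f x = f' \<xi> * (y - x)"
proof (cases "x \<le> y")
  case True
  have "\<exists>z\<in>{x..y}. f y - f x = (\<lambda>h. f' z * h) (y - x)"
  proof (rule mvt_very_simple[OF True])
    fix z assume "x \<le> z" "z \<le> y"
    then have "z \<in> {c..d}" "{x..y} \<subseteq> {c..d}" using x y by auto
    then show "(f has_derivative (\<lambda>h. f' z * h)) (at z within {x..y})"
      using D has_derivative_subset unfolding has_field_derivative_def
      by (metis mult.commute)
  qed
  then obtain z where "z \<in> {x..y}" "f y - f x = f' z * (y - x)" by auto
  then show ?thesis using x y by (intro bexI[of _ z]) auto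
next
  case False
  have "\<exists>z\<in>{y..x}. f x - f y = (\<lambda>h. f' z * h) (x - y)"
  proof (rule mvt_very_simple)
    show "y \<le> x" using False by simp
    fix z assume "y \<le> z" "z \<le> x"
    then have "z \<in> {c..d}" "{y..x} \<subseteq> {c..d}" using x y by auto
    then show "(f has_derivative (\<lambda>h. f' z * h)) (at z within {y..x})"
      using D has_derivative_subset unfolding has_field_derivative_def
      by (metis mult.commute)
  qed
  then obtain z where "z \<in> {y..x}" "f x - f y = f' z * (x - y)" by auto
  then show ?thesis using x y
    by (intro bexI[of _ z]) (auto simp: algebra_simps)
qed

lemma deriv_zero_unique:
  fixes f :: "real \<Rightarrow> real"
  assumes "c < d" "x \<in> {c..d}" "(f has_real_derivative D) (at x within {c..d})"
    and "\<And>y. y \<in> {c..d} \<Longrightarrow> f y = 0"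
  shows "D = 0"
proof -
  have "((\<lambda>y. 0) has_real_derivative D) (at x within {c..d})"
    using assms(3) by (rule has_field_derivative_transform_within[where d=1]) (use assms in auto)
  moreover have "((\<lambda>y. 0) has_real_derivative 0) (at x within {c..d})" by simp
  ultimately show ?thesis
    using vector_derivative_unique_within_closed_interval[of c d x "\<lambda>y. 0" D 0] assms
    by (simp add: has_real_derivative_iff_has_vector_derivative)
qed

lemma curve_deriv:
  fixes g g1 g2 :: "real \<Rightarrow> real \<Rightarrow> real" and \<gamma> :: "real \<Rightarrow> real"
  assumes D: "\<forall>p\<in>rect T. ((\<lambda>q. g (fst q) (snd q)) has_derivative
        (\<lambda>h. g1 (fst p) (snd p) * fst h + g2 (fst p) (snd p) * snd h)) (at p within rect T)"
    and \<gamma>: "\<forall>s\<in>{0..T}. \<gamma> s \<in> {-pi..pi}" and s: "s \<in> {0..T}"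
    and d\<gamma>: "(\<gamma> has_real_derivative \<gamma>') (at s within {0..T})"
  shows "((\<lambda>s. g s (\<gamma> s)) has_real_derivative g1 s (\<gamma> s) + g2 s (\<gamma> s) * \<gamma>') (at s within {0..T})"
proof -
  have P: "((\<lambda>s. (s, \<gamma> s)) has_derivative (\<lambda>h. (h, \<gamma>' * h))) (at s within {0..T})"
    using has_derivative_Pair[OF has_derivative_ident d\<gamma>[unfolded has_field_derivative_def]] by simp
  have im: "(\<lambda>s. (s, \<gamma> s)) ` {0..T} \<subseteq> rect T" using \<gamma> by (auto simp: rect_def)
  have "((\<lambda>s. (\<lambda>q. g (fst q) (snd q)) (s, \<gamma> s)) has_derivative
      (\<lambda>h. (\<lambda>p h. g1 (fst p) (snd p) * fst h + g2 (fst p) (snd p) * snd h) (s, \<gamma> s) (h, \<gamma>' * h))) (at s within {0..T})"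
    by (rule has_derivative_in_compose2[OF _ im s P]) (use D in auto)
  then show ?thesis unfolding has_field_derivative_def fst_conv snd_conv
    by (rule has_derivative_eq_rhs) (auto simp: fun_eq_iff algebra_simps)
qed

lemma line_deriv:
  fixes g g1 g2 :: "real \<Rightarrow> real \<Rightarrow> real"
  assumes D: "\<forall>p\<in>rect T. ((\<lambda>q. g (fst q) (snd q)) has_derivative
        (\<lambda>h. g1 (fst p) (snd p) * fst h + g2 (fst p) (snd p) * snd h)) (at p within rect T)"
    and t: "t \<in> {0..T}" and x: "x \<in> {-pi..pi}"
  shows "((\<lambda>x. g t x) has_real_derivative g2 t x) (at x within {-pi..pi})"
proof -
  have P: "((\<lambda>x. (t, x)) has_derivative (\<lambda>h. (0, h))) (at x within {-pi..pi})"
    by (auto intro!: has_derivative_Pair derivative_eq_intros)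
  have im: "(\<lambda>x. (t, x)) ` {-pi..pi} \<subseteq> rect T" using t by (auto simp: rect_def)
  have "((\<lambda>x. (\<lambda>q. g (fst q) (snd q)) (t, x)) has_derivative
      (\<lambda>h. (\<lambda>p h. g1 (fst p) (snd p) * fst h + g2 (fst p) (snd p) * snd h) (t, x) (0, h))) (at x within {-pi..pi})"
    by (rule has_derivative_in_compose2[OF _ im x P]) (use D in auto)
  moreover have "\<And>c::real. (\<lambda>h. h * c) = (*) c" by (auto simp: fun_eq_iff)
  ultimately show ?thesis unfolding has_field_derivative_def
    by (simp add: algebra_simps)
qed

lemma deriv_cont:
  fixes g :: "real \<Rightarrow> real"
  assumes "\<And>y. y \<in> S \<Longrightarrow> (g has_real_derivative g' y) (at y within S)"
  shows "continuous_on S g"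
  using assms continuous_on_eq_continuous_within DERIV_continuous by blast

lemma mvt_sub:
  fixes f f' :: "real \<Rightarrow> real"
  assumes "c \<le> d" "{c..d} \<subseteq> S"
    and D: "\<And>y. y \<in> {c..d} \<Longrightarrow> (f has_real_derivative f' y) (at y within S)"
  shows "\<exists>\<xi>\<in>{c..d}. f d - f c = f' \<xi> * (d - c)"
proof -
  have "\<exists>\<xi>\<in>{c..d}. \<bar>\<xi> - c\<bar> \<le> \<bar>d - c\<bar> \<and> f d - f c = f' \<xi> * (d - c)"
    by (rule mvt_between) (use assms in \<open>auto intro: DERIV_subset[OF D]\<close>)
  then show ?thesis by auto
qed

lemma dist_pair_le: "dist ((s::real), (y::real)) (t, x) \<le> \<bar>s - t\<bar> + \<bar>y - x\<bar>"
  unfolding dist_Pair_Pair dist_real_def using sqrt_sum_squares_le_sum_abs by simp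

lemma gronwall0:
  fixes d d' :: "real \<Rightarrow> real"
  assumes L: "L \<ge> 0"
    and nn: "\<And>s. s \<in> {0..T} \<Longrightarrow> d s \<ge> 0"
    and D: "\<And>s. s \<in> {0..T} \<Longrightarrow> (d has_real_derivative d' s) (at s within {0..T})"
    and B: "\<And>s. s \<in> {0..T} \<Longrightarrow> \<bar>d' s\<bar> \<le> L * d s"
    and s0: "s0 \<in> {0..T}" "d s0 = 0"
    and s: "s \<in> {0..T}"
  shows "d s = 0"
proof (cases "s0 \<le> s")
  case True
  have "\<exists>\<xi>\<in>{s0..s}. d s * exp (- L * s) - d s0 * exp (- L * s0) =
      (d' \<xi> * exp (- L * \<xi>) + d \<xi> * (exp (- L * \<xi>) * (- L))) * (s - s0)"
    apply (rule mvt_sub[OF True, of "{0..T}"])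
    using s0 s apply auto[1]
    apply (rule derivative_eq_intros D refl)+
    using s0 s apply auto[1]
    apply (rule derivative_eq_intros refl)+
    by (auto simp: algebra_simps)
  then obtain \<xi> where \<xi>: "\<xi> \<in> {s0..s}" "d s * exp (- L * s) - d s0 * exp (- L * s0) =
      (d' \<xi> * exp (- L * \<xi>) + d \<xi> * (exp (- L * \<xi>) * (- L))) * (s - s0)" by blast
  have \<xi>in: "\<xi> \<in> {0..T}" using \<xi> s0 s by auto
  have "d' \<xi> * exp (- L * \<xi>) + d \<xi> * (exp (- L * \<xi>) * (- L)) = (d' \<xi> - L * d \<xi>) * exp (- L * \<xi>)"
    by (simp add: algebra_simps)
  also have "\<dots> \<le> 0" using B[OF \<xi>in] by (intro mult_nonpos_nonneg) auto
  finally have "d s * exp (- L * s) \<le> 0" using \<xi> s0 True by (simp add: mult_nonpos_nonneg)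
  then have "d s \<le> 0" by (simp add: mult_le_0_iff)
  then show ?thesis using nn[OF s] by simp
next
  case False
  then have le: "s \<le> s0" by simp
  have "\<exists>\<xi>\<in>{s..s0}. d s0 * exp (L * s0) - d s * exp (L * s) =
      (d' \<xi> * exp (L * \<xi>) + d \<xi> * (exp (L * \<xi>) * L)) * (s0 - s)"
    apply (rule mvt_sub[OF le, of "{0..T}"])
    using s0 s apply auto[1]
    apply (rule derivative_eq_intros D refl)+
    using s0 s apply auto[1]
    apply (rule derivative_eq_intros refl)+
    by (auto simp: algebra_simps)
  then obtain \<xi> where \<xi>: "\<xi> \<in> {s..s0}" "d s0 * exp (L * s0) - d s * exp (L * s) =
      (d' \<xi> * exp (L * \<xi>) + d \<xi> * (exp (L * \<xi>) * L)) * (s0 - s)" by blast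
  have \<xi>in: "\<xi> \<in> {0..T}" using \<xi> s0 s by auto
  have "d' \<xi> * exp (L * \<xi>) + d \<xi> * (exp (L * \<xi>) * L) = (d' \<xi> + L * d \<xi>) * exp (L * \<xi>)"
    by (simp add: algebra_simps)
  also have "\<dots> \<ge> 0" using B[OF \<xi>in] by (intro mult_nonneg_nonneg) auto
  finally have F: "0 \<le> d' \<xi> * exp (L * \<xi>) + d \<xi> * (exp (L * \<xi>) * L)" .
  have "0 \<le> (d' \<xi> * exp (L * \<xi>) + d \<xi> * (exp (L * \<xi>) * L)) * (s0 - s)"
    using F le by simp
  then have "d s * exp (L * s) \<le> 0" using \<xi>(2) s0(2) by simp
  then have "d s \<le> 0" by (simp add: mult_le_0_iff)
  then show ?thesis using nn[OF s] by simp
qed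

lemma compact_rect: "compact (rect T)"
  unfolding rect_def by (intro compact_Times compact_Icc)

lemma bound_on:
  fixes g :: "real \<Rightarrow> real \<Rightarrow> real"
  assumes "continuous_on (rect T) (\<lambda>q. g (fst q) (snd q))"
  obtains M where "M > 0" "\<And>t x. t \<in> {0..T} \<Longrightarrow> x \<in> {-pi..pi} \<Longrightarrow> \<bar>g t x\<bar> \<le> M"
proof -
  have "bounded ((\<lambda>q. g (fst q) (snd q)) ` rect T)"
    by (rule compact_imp_bounded[OF compact_continuous_image[OF assms compact_rect]])
  then obtain M where M: "\<forall>y\<in>(\<lambda>q. g (fst q) (snd q)) ` rect T. \<bar>y\<bar> \<le> M"
    unfolding bounded_real by blast
  show ?thesis
  proof (rule that[of "\<bar>M\<bar> + 1"])
    show "\<bar>M\<bar> + 1 > 0" by linarith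
    fix t x assume "t \<in> {0..T}" "x \<in> {-pi..pi}"
    then have "\<bar>g t x\<bar> \<le> M" using M by (force simp: rect_def)
    then show "\<bar>g t x\<bar> \<le> \<bar>M\<bar> + 1" by simp
  qed
qed

context
  fixes a a_t a_x a_xx a_tt a_tx a_xt :: "real \<Rightarrow> real \<Rightarrow> real" and T :: real
  assumes T: "T > 0"
    and Da: "\<forall>p\<in>rect T. ((\<lambda>q. a (fst q) (snd q)) has_derivative
        (\<lambda>h. a_t (fst p) (snd p) * fst h + a_x (fst p) (snd p) * snd h)) (at p within rect T)"
    and Dt: "\<forall>p\<in>rect T. ((\<lambda>q. a_t (fst q) (snd q)) has_derivative
        (\<lambda>h. a_tt (fst p) (snd p) * fst h + a_tx (fst p) (snd p) * snd h)) (at p within rect T)"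
    and Dx: "\<forall>p\<in>rect T. ((\<lambda>q. a_x (fst q) (snd q)) has_derivative
        (\<lambda>h. a_xt (fst p) (snd p) * fst h + a_xx (fst p) (snd p) * snd h)) (at p within rect T)"
    and ctx: "continuous_on (rect T) (\<lambda>q. a_tx (fst q) (snd q))"
    and cxt: "continuous_on (rect T) (\<lambda>q. a_xt (fst q) (snd q))"
    and cxx: "continuous_on (rect T) (\<lambda>q. a_xx (fst q) (snd q))"
begin

lemma schwarz:
  assumes t: "t \<in> {0..T}" and x: "x \<in> {-pi..pi}"
  shows "a_tx t x = a_xt t x"
proof (rule ccontr)
  assume ne: "a_tx t x \<noteq> a_xt t x"
  define e where "e = \<bar>a_tx t x - a_xt t x\<bar> / 4"
  have e: "e > 0" using ne by (simp add: e_def)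
  have tx: "(t, x) \<in> rect T" using t x by (simp add: rect_def)
  obtain d1 where d1: "d1 > 0" "\<forall>q\<in>rect T. dist q (t, x) < d1 \<longrightarrow>
      dist (a_tx (fst q) (snd q)) (a_tx t x) < e"
    using ctx tx e unfolding continuous_on_iff by fastforce
  obtain d2 where d2: "d2 > 0" "\<forall>q\<in>rect T. dist q (t, x) < d2 \<longrightarrow>
      dist (a_xt (fst q) (snd q)) (a_xt t x) < e"
    using cxt tx e unfolding continuous_on_iff by fastforce
  define r where "r = min (min d1 d2 / 3) (min (T/2) pi)"
  have r: "r > 0" "r \<le> T/2" "r \<le> pi" "3 * r \<le> d1" "3 * r \<le> d2"
    using d1 d2 T pi_gt_zero by (auto simp: r_def)
  define t1 where "t1 = (if t + r \<le> T then t else t - r)"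
  define x1 where "x1 = (if x + r \<le> pi then x else x - r)"
  define t2 where "t2 = t1 + r"
  define x2 where "x2 = x1 + r"
  have tt: "0 \<le> t1" "t1 < t2" "t2 \<le> T" "\<bar>t1 - t\<bar> \<le> r" "\<bar>t2 - t\<bar> \<le> r"
    using t r by (auto simp: t1_def t2_def)
  have xx: "-pi \<le> x1" "x1 < x2" "x2 \<le> pi" "\<bar>x1 - x\<bar> \<le> r" "\<bar>x2 - x\<bar> \<le> r"
    using x r by (auto simp: x1_def x2_def)
  have box: "(s, y) \<in> rect T \<and> dist (s, y) (t, x) < min d1 d2"
    if "s \<in> {t1..t2}" "y \<in> {x1..x2}" for s y
  proof -
    have "\<bar>s - t\<bar> \<le> r" "\<bar>y - x\<bar> \<le> r" using that tt xx by auto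
    then have "dist (s, y) (t, x) \<le> 2 * r" using dist_pair_le[of s y t x] by linarith
    then show ?thesis using that tt xx r by (auto simp: rect_def)
  qed
  have sub_t: "{t1..t2} \<subseteq> {0..T}" and sub_x: "{x1..x2} \<subseteq> {-pi..pi}" using tt xx by auto
  have x1in: "x1 \<in> {-pi..pi}" and x2in: "x2 \<in> {-pi..pi}" using xx by auto
  have t1in: "t1 \<in> {0..T}" and t2in: "t2 \<in> {0..T}" using tt by auto
  have cd: "\<And>y. y \<in> {-pi..pi} \<Longrightarrow> s \<in> {0..T} \<Longrightarrow>
      ((\<lambda>s. a s y) has_real_derivative a_t s y) (at s within {0..T})" for s
    using curve_deriv[OF Da, of "\<lambda>_. y" s 0 for y] by auto
  have cdx: "\<And>y. y \<in> {-pi..pi} \<Longrightarrow> s \<in> {0..T} \<Longrightarrow>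
      ((\<lambda>s. a_x s y) has_real_derivative a_xt s y) (at s within {0..T})" for s
    using curve_deriv[OF Dx, of "\<lambda>_. y" s 0 for y] by auto
  obtain s1 where s1: "s1 \<in> {t1..t2}"
    "(a t2 x2 - a t2 x1) - (a t1 x2 - a t1 x1) = (a_t s1 x2 - a_t s1 x1) * (t2 - t1)"
    using mvt_sub[of t1 t2 "{0..T}" "\<lambda>s. a s x2 - a s x1" "\<lambda>s. a_t s x2 - a_t s x1"]
      tt sub_t cd x1in x2in by (force intro!: DERIV_diff)
  have s1in: "s1 \<in> {0..T}" using s1 sub_t by auto
  obtain y1 where y1: "y1 \<in> {x1..x2}" "a_t s1 x2 - a_t s1 x1 = a_tx s1 y1 * (x2 - x1)"
    using mvt_sub[of x1 x2 "{-pi..pi}" "\<lambda>y. a_t s1 y" "\<lambda>y. a_tx s1 y"]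
      xx sub_x line_deriv[OF Dt s1in] by force
  obtain y2 where y2: "y2 \<in> {x1..x2}"
    "(a t2 x2 - a t1 x2) - (a t2 x1 - a t1 x1) = (a_x t2 y2 - a_x t1 y2) * (x2 - x1)"
    using mvt_sub[of x1 x2 "{-pi..pi}" "\<lambda>y. a t2 y - a t1 y" "\<lambda>y. a_x t2 y - a_x t1 y"]
      xx sub_x line_deriv[OF Da t2in] line_deriv[OF Da t1in] by (force intro!: DERIV_diff)
  have y2in: "y2 \<in> {-pi..pi}" using y2 sub_x by auto
  obtain s2 where s2: "s2 \<in> {t1..t2}" "a_x t2 y2 - a_x t1 y2 = a_xt s2 y2 * (t2 - t1)"
    using mvt_sub[of t1 t2 "{0..T}" "\<lambda>s. a_x s y2" "\<lambda>s. a_xt s y2"]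
      tt sub_t cdx y2in by force
  have "a_tx s1 y1 * ((x2 - x1) * (t2 - t1)) = a_xt s2 y2 * ((x2 - x1) * (t2 - t1))"
    using s1(2) y1(2) y2(2) s2(2) by (simp add: algebra_simps)
  moreover have "(x2 - x1) * (t2 - t1) \<noteq> 0" using tt xx by simp
  ultimately have eq: "a_tx s1 y1 = a_xt s2 y2" by simp
  have "dist (a_tx s1 y1) (a_tx t x) < e" using d1 box[OF s1(1) y1(1)] by auto
  moreover have "dist (a_xt s2 y2) (a_xt t x) < e" using d2 box[OF s2(1) y2(1)] by auto
  ultimately have "\<bar>a_tx t x - a_xt t x\<bar> < 2 * e" using eq by (simp add: dist_real_def)
  then show False using e by (simp add: e_def)
qed

lemma cont_x: assumes "t \<in> {0..T}" shows "continuous_on {-pi..pi} (a t)"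
  by (rule deriv_cont[of _ _ "a_x t"]) (use line_deriv[OF Da assms] in auto)

lemma cont_xx: assumes "t \<in> {0..T}" shows "continuous_on {-pi..pi} (a_x t)"
  by (rule deriv_cont[of _ _ "a_xx t"]) (use line_deriv[OF Dx assms] in auto)

lemma pde_x:
  assumes pde: "\<forall>t\<in>{0..T}. \<forall>x\<in>{-pi..pi}.
        a_t t x + integral {-pi..x} (a t) * a_x t x - (a t x)^2
          + (1/pi) * integral {-pi..pi} (\<lambda>y. (a t y)^2) = 0"
    and t: "t \<in> {0..T}" and x: "x \<in> {-pi..pi}"
  shows "a_xt t x = a t x * a_x t x - integral {-pi..x} (a t) * a_xx t x"
proof -
  have D1: "(a_t t has_real_derivative a_tx t x) (at x within {-pi..pi})"
    using line_deriv[OF Dt t x] .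
  have D2: "((\<lambda>y. integral {-pi..y} (a t)) has_real_derivative a t x) (at x within {-pi..pi})"
    by (rule integral_has_real_derivative[OF cont_x[OF t] x])
  have D3: "(a_x t has_real_derivative a_xx t x) (at x within {-pi..pi})"
    using line_deriv[OF Dx t x] .
  have D4: "(a t has_real_derivative a_x t x) (at x within {-pi..pi})"
    using line_deriv[OF Da t x] .
  have "((\<lambda>y. a_t t y + integral {-pi..y} (a t) * a_x t y - (a t y)^2
          + (1/pi) * integral {-pi..pi} (\<lambda>y. (a t y)^2)) has_real_derivative
      (a_tx t x + (a t x * a_x t x + integral {-pi..x} (a t) * a_xx t x) - 2 * a t x * a_x t x + 0))
      (at x within {-pi..pi})"
    apply (rule derivative_eq_intros D1 D2 D3 D4 refl)+
    by (simp add: algebra_simps)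
  note DD = this
  have "a_tx t x + (a t x * a_x t x + integral {-pi..x} (a t) * a_xx t x) - 2 * a t x * a_x t x + 0 = 0"
    by (rule deriv_zero_unique[of "-pi" pi x, OF _ _ DD]) (use x pde t in auto)
  then show ?thesis using schwarz[OF t x] by (simp add: algebra_simps)
qed

lemma a_cont_rect: "continuous_on (rect T) (\<lambda>q. a (fst q) (snd q))"
  using Da has_derivative_continuous continuous_on_eq_continuous_within by blast

context
  fixes xs :: "real \<Rightarrow> real" and x0 :: real
  assumes pde: "\<forall>t\<in>{0..T}. \<forall>x\<in>{-pi..pi}.
        a_t t x + integral {-pi..x} (a t) * a_x t x - (a t x)^2
          + (1/pi) * integral {-pi..pi} (\<lambda>y. (a t y)^2) = 0"
    and mean0: "\<forall>t\<in>{0..T}. integral {-pi..pi} (a t) = 0"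
    and x0: "x0 \<in> {-pi..pi}"
    and crit: "a_x 0 x0 = 0"
    and char_range: "\<forall>t\<in>{0..T}. xs t \<in> {-pi..pi}"
    and char_init: "xs 0 = x0"
    and char_ode: "\<forall>t\<in>{0..T}.
        (xs has_real_derivative integral {-pi..xs t} (a t)) (at t within {0..T})"
begin

lemma main_step:
  assumes t: "t \<in> {0..T}"
  shows "a_xx t (xs t) = a_xx 0 x0"
proof -
  obtain Ma where Ma: "Ma > 0" "\<And>t x. t \<in> {0..T} \<Longrightarrow> x \<in> {-pi..pi} \<Longrightarrow> \<bar>a t x\<bar> \<le> Ma"
    using bound_on[OF a_cont_rect] by blast
  obtain M2 where M2: "M2 > 0" "\<And>t x. t \<in> {0..T} \<Longrightarrow> x \<in> {-pi..pi} \<Longrightarrow> \<bar>a_xx t x\<bar> \<le> M2"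
    using bound_on[OF cxx] by blast
  define I where "I s = integral {0..s} (\<lambda>r. a r (xs r))" for s
  define K where "K = exp (Ma * T)"
  have K: "K \<ge> 1" using Ma T by (simp add: K_def)
  have axs_cont: "continuous_on {0..T} (\<lambda>r. a r (xs r))"
    by (rule deriv_cont) (use curve_deriv[OF Da char_range _ char_ode[rule_format]] in auto)
  have dI: "\<And>s. s \<in> {0..T} \<Longrightarrow> (I has_real_derivative a s (xs s)) (at s within {0..T})"
    unfolding I_def by (rule integral_has_real_derivative[OF axs_cont])
  have I0: "I 0 = 0" by (simp add: I_def)
  have Ib: "\<bar>I s\<bar> \<le> Ma * T" if s: "s \<in> {0..T}" for s
  proof -
    obtain \<xi> where \<xi>: "\<xi> \<in> {0..s}" "I s - I 0 = a \<xi> (xs \<xi>) * (s - 0)"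
      using mvt_sub[of 0 s "{0..T}" I "\<lambda>r. a r (xs r)"] s dI by force
    have \<xi>in: "\<xi> \<in> {0..T}" using \<xi> s by auto
    have "\<bar>I s\<bar> = \<bar>a \<xi> (xs \<xi>)\<bar> * s" using \<xi> I0 s by (simp add: abs_mult)
    also have "\<dots> \<le> Ma * T" using Ma(2)[OF \<xi>in char_range[rule_format, OF \<xi>in]] s Ma(1)
      by (intro mult_mono) auto
    finally show ?thesis .
  qed
  have EK: "exp (I s) \<le> K" "exp (- I s) \<le> K" if "s \<in> {0..T}" for s
    using Ib[OF that] by (auto simp: K_def)
  have uD: "((\<lambda>y. integral {-pi..y} (a s)) has_real_derivative a s x) (at x within {-pi..pi})"
    if "s \<in> {0..T}" "x \<in> {-pi..pi}" for s x
    by (rule integral_has_real_derivative[OF cont_x[OF that(1)] that(2)])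
  have inv: "\<forall>s\<in>{0..T}. xs s = pi" if hit: "\<exists>s0\<in>{0..T}. xs s0 = pi"
  proof
    fix s assume s: "s \<in> {0..T}"
    obtain s0 where s0: "s0 \<in> {0..T}" "xs s0 = pi" using hit by blast
    have "pi - xs s = 0"
    proof (rule gronwall0[of Ma T "\<lambda>s. pi - xs s" "\<lambda>s. - integral {-pi..xs s} (a s)" s0 s])
      show "0 \<le> Ma" using Ma by simp
      show "0 \<le> pi - xs r" if "r \<in> {0..T}" for r using char_range that by auto
      show "((\<lambda>s. pi - xs s) has_real_derivative - integral {-pi..xs r} (a r)) (at r within {0..T})"
        if "r \<in> {0..T}" for r
        using char_ode that by (auto intro!: derivative_eq_intros)
      show "\<bar>- integral {-pi..xs r} (a r)\<bar> \<le> Ma * (pi - xs r)" if r: "r \<in> {0..T}" for r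
      proof -
        have xr: "xs r \<in> {-pi..pi}" using char_range r by auto
        obtain \<xi> where \<xi>: "\<xi> \<in> {-pi..pi}"
          "integral {-pi..pi} (a r) - integral {-pi..xs r} (a r) = a r \<xi> * (pi - xs r)"
          using mvt_between[of "-pi" pi "\<lambda>y. integral {-pi..y} (a r)" "a r" "xs r" pi] uD[OF r] xr
          by force
        then have "\<bar>- integral {-pi..xs r} (a r)\<bar> = \<bar>a r \<xi>\<bar> * (pi - xs r)"
          using mean0 r xr by (simp add: abs_mult)
        also have "\<dots> \<le> Ma * (pi - xs r)" using Ma(2)[OF r \<xi>(1)] xr by (intro mult_right_mono) auto
        finally show ?thesis .
      qed
    qed (use s0 s in auto)
    then show "xs s = pi" by simp
  qed
  have xs_cont: "continuous_on {0..T} xs"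
    by (rule deriv_cont) (use char_ode in auto)
  have Epos: "exp (I s) > 0" for s by simp
  obtain \<sigma> h0 where \<sigma>: "\<sigma> = 1 \<or> \<sigma> = -1" "h0 > 0"
    "\<And>k s. 0 < k \<Longrightarrow> k < h0 \<Longrightarrow> s \<in> {0..T} \<Longrightarrow> xs s + \<sigma> * k * exp (I s) \<in> {-pi..pi}"
  proof (cases "\<exists>s0\<in>{0..T}. xs s0 = pi")
    case True
    then have xp: "\<forall>s\<in>{0..T}. xs s = pi" by (rule inv)
    show ?thesis
    proof (rule that[of "-1" "2 * pi / K"])
      show "2 * pi / K > 0" using K by simp
      fix k s assume k: "0 < k" "k < 2 * pi / K" and s: "s \<in> {0..T}"
      have "k * exp (I s) \<le> k * K" using EK(1)[OF s] k by simp
      also have "\<dots> < 2 * pi" using k K by (simp add: field_simps)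
      finally show "xs s + -1 * k * exp (I s) \<in> {-pi..pi}" using xp s k by auto
    qed simp
  next
    case False
    then have lt: "\<forall>s\<in>{0..T}. xs s < pi" using char_range by force
    obtain sm where sm: "sm \<in> {0..T}" "\<forall>s\<in>{0..T}. pi - xs sm \<le> pi - xs s"
      using continuous_attains_inf[of "{0..T}" "\<lambda>s. pi - xs s"] xs_cont T
      by (force intro: continuous_intros)
    define m where "m = pi - xs sm"
    have m: "m > 0" using lt sm by (auto simp: m_def)
    show ?thesis
    proof (rule that[of 1 "m / K"])
      show "m / K > 0" using K m by simp
      fix k s assume k: "0 < k" "k < m / K" and s: "s \<in> {0..T}"
      have "k * exp (I s) \<le> k * K" using EK(1)[OF s] k by simp
      also have "\<dots> < m" using k K by (simp add: field_simps)
      finally have c0: "k * exp (I s) < m" .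
      have "pi - xs sm \<le> pi - xs s" using sm s by blast
      then have c1: "xs s + k * exp (I s) < pi" using c0 unfolding m_def by linarith
      have "0 \<le> k * exp (I s)" using k by simp
      then show "xs s + 1 * k * exp (I s) \<in> {-pi..pi}"
        using c1 s char_range by force
    qed simp
  qed
  have ZD: "((\<lambda>s. a_x s (xs s + h * exp (I s)) * exp (- I s)) has_real_derivative
        (a s (xs s + h * exp (I s)) * a_x s (xs s + h * exp (I s))
          - a s (xs s) * a_x s (xs s + h * exp (I s))
          + a_xx s (xs s + h * exp (I s)) * (integral {-pi..xs s} (a s) + h * (exp (I s) * a s (xs s))
              - integral {-pi..xs s + h * exp (I s)} (a s))) * exp (- I s)) (at s within {0..T})"
    if Yin: "\<forall>s\<in>{0..T}. xs s + h * exp (I s) \<in> {-pi..pi}" and s: "s \<in> {0..T}" for h s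
  proof -
    have dY: "((\<lambda>s. xs s + h * exp (I s)) has_real_derivative
        integral {-pi..xs s} (a s) + h * (exp (I s) * a s (xs s))) (at s within {0..T})"
      using char_ode s dI[OF s] by (auto intro!: derivative_eq_intros)
    have dA: "((\<lambda>s. a_x s (xs s + h * exp (I s))) has_real_derivative
        a_xt s (xs s + h * exp (I s)) + a_xx s (xs s + h * exp (I s)) *
          (integral {-pi..xs s} (a s) + h * (exp (I s) * a s (xs s)))) (at s within {0..T})"
      by (rule curve_deriv[OF Dx Yin s dY])
    have dE: "((\<lambda>s. exp (- I s)) has_real_derivative exp (- I s) * (- a s (xs s))) (at s within {0..T})"
      using dI[OF s] by (auto intro!: derivative_eq_intros)
    have Ys: "xs s + h * exp (I s) \<in> {-pi..pi}" using Yin s by blast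
    show ?thesis
      apply (rule DERIV_cong[OF DERIV_mult[OF dA dE]])
      by (simp add: pde_x[OF pde s Ys] algebra_simps)
  qed
  have Yin0: "\<forall>s\<in>{0..T}. xs s + 0 * exp (I s) \<in> {-pi..pi}" using char_range by simp
  have ax0: "a_x s (xs s) = 0" if s: "s \<in> {0..T}" for s
  proof -
    have "\<exists>\<xi>\<in>{0..s}. a_x s (xs s + 0 * exp (I s)) * exp (- I s) - a_x 0 (xs 0 + 0 * exp (I 0)) * exp (- I 0)
       = (a (\<xi>) (xs \<xi> + 0 * exp (I \<xi>)) * a_x \<xi> (xs \<xi> + 0 * exp (I \<xi>))
          - a \<xi> (xs \<xi>) * a_x \<xi> (xs \<xi> + 0 * exp (I \<xi>))
          + a_xx \<xi> (xs \<xi> + 0 * exp (I \<xi>)) * (integral {-pi..xs \<xi>} (a \<xi>) + 0 * (exp (I \<xi>) * a \<xi> (xs \<xi>))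
              - integral {-pi..xs \<xi> + 0 * exp (I \<xi>)} (a \<xi>))) * exp (- I \<xi>) * (s - 0)"
      by (rule mvt_sub[of 0 s "{0..T}"]) (use s ZD[OF Yin0] in auto)
    then have "a_x s (xs s) * exp (- I s) = 0" using I0 char_init crit by simp
    then show ?thesis by simp
  qed
  obtain \<delta>u where \<delta>u: "\<And>\<epsilon>. \<epsilon> > 0 \<Longrightarrow> \<delta>u \<epsilon> > 0"
    "\<And>\<epsilon> s y y'. \<epsilon> > 0 \<Longrightarrow> s \<in> {0..T} \<Longrightarrow> y \<in> {-pi..pi} \<Longrightarrow> y' \<in> {-pi..pi} \<Longrightarrow>
       \<bar>y' - y\<bar> < \<delta>u \<epsilon> \<Longrightarrow> \<bar>a s y' - a s y\<bar> < \<epsilon>"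
  proof -
    have uc: "uniformly_continuous_on (rect T) (\<lambda>q. a (fst q) (snd q))"
      by (rule compact_uniformly_continuous[OF a_cont_rect compact_rect])
    have "\<forall>\<epsilon>>0. \<exists>d>0. \<forall>s y y'. s \<in> {0..T} \<longrightarrow> y \<in> {-pi..pi} \<longrightarrow> y' \<in> {-pi..pi} \<longrightarrow>
       \<bar>y' - y\<bar> < d \<longrightarrow> \<bar>a s y' - a s y\<bar> < \<epsilon>"
    proof (intro allI impI)
      fix \<epsilon> :: real assume "\<epsilon> > 0"
      then obtain d where d: "d > 0" "\<forall>p\<in>rect T. \<forall>p'\<in>rect T. dist p' p < d \<longrightarrow>
          dist (a (fst p') (snd p')) (a (fst p) (snd p)) < \<epsilon>"
        using uc unfolding uniformly_continuous_on_def by metis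
      show "\<exists>d>0. \<forall>s y y'. s \<in> {0..T} \<longrightarrow> y \<in> {-pi..pi} \<longrightarrow> y' \<in> {-pi..pi} \<longrightarrow>
       \<bar>y' - y\<bar> < d \<longrightarrow> \<bar>a s y' - a s y\<bar> < \<epsilon>"
      proof (intro exI[of _ d] conjI allI impI)
        fix s y y' assume "s \<in> {0..T}" "y \<in> {-pi..pi}" "y' \<in> {-pi..pi}" "\<bar>y' - y\<bar> < d"
        moreover have "dist (s, y') (s, y) \<le> \<bar>s - s\<bar> + \<bar>y' - y\<bar>" by (rule dist_pair_le)
        ultimately show "\<bar>a s y' - a s y\<bar> < \<epsilon>"
          using d(2)[rule_format, of "(s, y)" "(s, y')"] by (auto simp: rect_def dist_real_def)
      qed (use d in auto)
    qed
    then show ?thesis using that by metis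
  qed
  define Z where "Z h s = a_x s (xs s + h * exp (I s)) * exp (- I s)" for h s
  have est: "\<exists>\<delta>>0. \<forall>h. \<bar>h\<bar> < \<delta> \<longrightarrow> (\<forall>s\<in>{0..T}. xs s + h * exp (I s) \<in> {-pi..pi}) \<longrightarrow>
      \<bar>Z h t - Z h 0\<bar> \<le> e * \<bar>h\<bar>" if e: "e > 0" for e
  proof -
    define \<epsilon> where "\<epsilon> = e / (2 * M2 * K * K * (T + 1))"
    have \<epsilon>: "\<epsilon> > 0" using e M2 K T by (simp add: \<epsilon>_def)
    have e_eq: "2 * \<epsilon> * M2 * K * K * (T + 1) = e" using M2 K T by (simp add: \<epsilon>_def)
    define \<delta>0 where "\<delta>0 = \<delta>u \<epsilon>"
    have \<delta>0: "\<delta>0 > 0" using \<delta>u(1)[OF \<epsilon>] by (simp add: \<delta>0_def)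
    show ?thesis
    proof (intro exI[of _ "\<delta>0 / K"] conjI allI impI)
      show "\<delta>0 / K > 0" using \<delta>0 K by simp
      fix h assume h: "\<bar>h\<bar> < \<delta>0 / K" and Yin: "\<forall>s\<in>{0..T}. xs s + h * exp (I s) \<in> {-pi..pi}"
      have hK: "\<bar>h\<bar> * K < \<delta>0" using h K by (simp add: field_simps)
      have Dbound: "\<bar>(a s (xs s + h * exp (I s)) * a_x s (xs s + h * exp (I s))
          - a s (xs s) * a_x s (xs s + h * exp (I s))
          + a_xx s (xs s + h * exp (I s)) * (integral {-pi..xs s} (a s) + h * (exp (I s) * a s (xs s))
              - integral {-pi..xs s + h * exp (I s)} (a s))) * exp (- I s)\<bar>
          \<le> 2 * \<epsilon> * M2 * K * K * \<bar>h\<bar>" if s: "s \<in> {0..T}" for s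
      proof -
        define y where "y = xs s"
        define E where "E = exp (I s)"
        define Y where "Y = y + h * E"
        have y: "y \<in> {-pi..pi}" using char_range s by (simp add: y_def)
        have Y: "Y \<in> {-pi..pi}" using Yin s by (simp add: Y_def y_def E_def)
        have E: "E > 0" "E \<le> K" using EK(1)[OF s] by (auto simp: E_def)
        have Yy: "\<bar>Y - y\<bar> = \<bar>h\<bar> * E" by (simp add: Y_def abs_mult E(1) less_imp_le)
        have YyK: "\<bar>Y - y\<bar> \<le> \<bar>h\<bar> * K" using Yy E by (simp add: mult_left_mono)
        have Yyd: "\<bar>Y - y\<bar> < \<delta>0" using YyK hK by linarith
        have A1: "\<bar>a s Y - a s y\<bar> \<le> \<epsilon>"
          using \<delta>u(2)[OF \<epsilon> s y Y] Yyd by (simp add: \<delta>0_def)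
        obtain \<xi> where \<xi>: "\<xi> \<in> {-pi..pi}" "a_x s Y - a_x s y = a_xx s \<xi> * (Y - y)"
          using mvt_between[of "-pi" pi "a_x s" "a_xx s" y Y] line_deriv[OF Dx s] y Y by blast
        have A2: "\<bar>a_x s Y\<bar> \<le> M2 * \<bar>Y - y\<bar>"
          using \<xi> ax0[OF s] M2(2)[OF s \<xi>(1)] by (simp add: y_def abs_mult mult_right_mono)
        obtain \<zeta> where \<zeta>: "\<zeta> \<in> {-pi..pi}" "\<bar>\<zeta> - y\<bar> \<le> \<bar>Y - y\<bar>"
          "integral {-pi..Y} (a s) - integral {-pi..y} (a s) = a s \<zeta> * (Y - y)"
          using mvt_between[of "-pi" pi "\<lambda>x. integral {-pi..x} (a s)" "a s" y Y] uD[OF s] y Y by blast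
        have "\<bar>a s \<zeta> - a s y\<bar> < \<epsilon>"
          using \<delta>u(2)[OF \<epsilon> s y \<zeta>(1)] \<zeta>(2) Yyd by (simp add: \<delta>0_def)
        have R: "integral {-pi..y} (a s) + h * (E * a s y) - integral {-pi..Y} (a s)
            = (a s y - a s \<zeta>) * (Y - y)"
          using \<zeta>(3) by (simp add: Y_def algebra_simps)
        have A3: "\<bar>integral {-pi..y} (a s) + h * (E * a s y) - integral {-pi..Y} (a s)\<bar> \<le> \<epsilon> * \<bar>Y - y\<bar>"
          unfolding R abs_mult using \<open>\<bar>a s \<zeta> - a s y\<bar> < \<epsilon>\<close>
          by (intro mult_right_mono) auto
        have B1: "\<bar>(a s Y - a s y) * a_x s Y\<bar> \<le> \<epsilon> * (M2 * \<bar>Y - y\<bar>)"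
          unfolding abs_mult using A1 A2 by (intro mult_mono) auto
        have B2: "\<bar>a_xx s Y * (integral {-pi..y} (a s) + h * (E * a s y) - integral {-pi..Y} (a s))\<bar>
            \<le> M2 * (\<epsilon> * \<bar>Y - y\<bar>)"
          unfolding abs_mult using A3 M2(2)[OF s Y] \<epsilon> by (intro mult_mono) auto
        have B3: "\<bar>(a s Y - a s y) * a_x s Y + a_xx s Y * (integral {-pi..y} (a s) + h * (E * a s y)
            - integral {-pi..Y} (a s))\<bar> \<le> 2 * \<epsilon> * M2 * \<bar>Y - y\<bar>"
          using B1 B2 abs_triangle_ineq[of "(a s Y - a s y) * a_x s Y"] by (simp add: algebra_simps)
        have B4: "\<bar>((a s Y - a s y) * a_x s Y + a_xx s Y * (integral {-pi..y} (a s) + h * (E * a s y)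
            - integral {-pi..Y} (a s))) * exp (- I s)\<bar> \<le> (2 * \<epsilon> * M2 * \<bar>Y - y\<bar>) * K"
          unfolding abs_mult using B3 EK(2)[OF s] \<epsilon> M2 by (intro mult_mono) auto
        also have "\<dots> \<le> (2 * \<epsilon> * M2 * (\<bar>h\<bar> * K)) * K"
          using YyK \<epsilon> M2 K by (intro mult_right_mono mult_left_mono) auto
        finally show ?thesis by (simp add: Y_def y_def E_def algebra_simps)
      qed
      have "\<exists>\<xi>\<in>{0..t}. Z h t - Z h 0 =
        (a \<xi> (xs \<xi> + h * exp (I \<xi>)) * a_x \<xi> (xs \<xi> + h * exp (I \<xi>))
          - a \<xi> (xs \<xi>) * a_x \<xi> (xs \<xi> + h * exp (I \<xi>))
          + a_xx \<xi> (xs \<xi> + h * exp (I \<xi>)) * (integral {-pi..xs \<xi>} (a \<xi>) + h * (exp (I \<xi>) * a \<xi> (xs \<xi>))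
              - integral {-pi..xs \<xi> + h * exp (I \<xi>)} (a \<xi>))) * exp (- I \<xi>) * (t - 0)"
        unfolding Z_def by (rule mvt_sub[of 0 t "{0..T}"]) (use t ZD[OF Yin] in auto)
      then obtain \<xi> where \<xi>: "\<xi> \<in> {0..t}" "Z h t - Z h 0 =
        (a \<xi> (xs \<xi> + h * exp (I \<xi>)) * a_x \<xi> (xs \<xi> + h * exp (I \<xi>))
          - a \<xi> (xs \<xi>) * a_x \<xi> (xs \<xi> + h * exp (I \<xi>))
          + a_xx \<xi> (xs \<xi> + h * exp (I \<xi>)) * (integral {-pi..xs \<xi>} (a \<xi>) + h * (exp (I \<xi>) * a \<xi> (xs \<xi>))
              - integral {-pi..xs \<xi> + h * exp (I \<xi>)} (a \<xi>))) * exp (- I \<xi>) * (t - 0)" by blast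
      have \<xi>in: "\<xi> \<in> {0..T}" using \<xi> t by auto
      have "\<bar>Z h t - Z h 0\<bar> \<le> (2 * \<epsilon> * M2 * K * K * \<bar>h\<bar>) * (T + 1)"
      proof -
        have gen: "\<bar>D * (t - 0)\<bar> \<le> (2 * \<epsilon> * M2 * K * K * \<bar>h\<bar>) * (T + 1)"
          if "\<bar>D\<bar> \<le> 2 * \<epsilon> * M2 * K * K * \<bar>h\<bar>" for D
          unfolding abs_mult using that t \<epsilon> M2 K by (intro mult_mono) auto
        show ?thesis unfolding \<xi>(2) by (rule gen[OF Dbound[OF \<xi>in]])
      qed
      also have "\<dots> = e * \<bar>h\<bar>" by (subst e_eq[symmetric]) (simp add: algebra_simps)
      finally show "\<bar>Z h t - Z h 0\<bar> \<le> e * \<bar>h\<bar>" .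
    qed
  qed
  have \<sigma>ne: "\<sigma> \<noteq> 0" and \<sigma>abs: "\<bar>\<sigma>\<bar> = 1" using \<sigma>(1) by auto
  have lim: "((\<lambda>k. a_x r (xs r + \<sigma> * k * exp (I r)) / (\<sigma> * k)) \<longlongrightarrow> a_xx r (xs r) * exp (I r)) (at_right 0)"
    if r: "r \<in> {0..T}" for r
  proof -
    have yr: "xs r \<in> {-pi..pi}" using char_range r by blast
    have L1: "((\<lambda>y. (a_x r y - a_x r (xs r)) / (y - xs r)) \<longlongrightarrow> a_xx r (xs r)) (at (xs r) within {-pi..pi})"
      using line_deriv[OF Dx r yr] by (simp add: has_field_derivative_iff)
    have F: "filterlim (\<lambda>k. xs r + \<sigma> * k * exp (I r)) (at (xs r) within {-pi..pi}) (at_right 0)"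
      unfolding filterlim_at
    proof
      show "\<forall>\<^sub>F k in at_right 0. xs r + \<sigma> * k * exp (I r) \<in> {-pi..pi} \<and> xs r + \<sigma> * k * exp (I r) \<noteq> xs r"
        using eventually_at_right_real[OF \<sigma>(2)]
        by eventually_elim (use \<sigma>(3) r \<sigma>ne in auto)
      have "((\<lambda>k. xs r + \<sigma> * k * exp (I r)) \<longlongrightarrow> xs r + \<sigma> * 0 * exp (I r)) (at_right 0)"
        by (intro tendsto_intros)
      then show "((\<lambda>k. xs r + \<sigma> * k * exp (I r)) \<longlongrightarrow> xs r) (at_right 0)" by simp
    qed
    have L2: "((\<lambda>k. (a_x r (xs r + \<sigma> * k * exp (I r)) - a_x r (xs r)) / (xs r + \<sigma> * k * exp (I r) - xs r)
        * exp (I r)) \<longlongrightarrow> a_xx r (xs r) * exp (I r)) (at_right 0)"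
      by (intro tendsto_mult_right filterlim_compose[OF L1 F])
    have ev: "\<forall>\<^sub>F k in at_right 0. (a_x r (xs r + \<sigma> * k * exp (I r)) - a_x r (xs r)) / (xs r + \<sigma> * k * exp (I r) - xs r)
        * exp (I r) = a_x r (xs r + \<sigma> * k * exp (I r)) / (\<sigma> * k)"
      using eventually_at_right_real[OF \<sigma>(2)]
      by eventually_elim (use ax0[OF r] \<sigma>ne in auto)
    show ?thesis using L2 tendsto_cong[OF ev] by blast
  qed
  have T1: "((\<lambda>k. Z (\<sigma> * k) t / (\<sigma> * k)) \<longlongrightarrow> a_xx t (xs t)) (at_right 0)"
  proof -
    have "((\<lambda>k. a_x t (xs t + \<sigma> * k * exp (I t)) / (\<sigma> * k) * exp (- I t)) \<longlongrightarrow>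
        a_xx t (xs t) * exp (I t) * exp (- I t)) (at_right 0)"
      by (intro tendsto_mult_right lim[OF t])
    then show ?thesis by (simp add: Z_def exp_minus_inverse mult.assoc)
  qed
  have z0: "(0::real) \<in> {0..T}" using T by simp
  have T0: "((\<lambda>k. Z (\<sigma> * k) 0 / (\<sigma> * k)) \<longlongrightarrow> a_xx 0 x0) (at_right 0)"
    using lim[OF z0] by (simp add: Z_def I0 char_init)
  have Tdiff: "((\<lambda>k. (Z (\<sigma> * k) t - Z (\<sigma> * k) 0) / (\<sigma> * k)) \<longlongrightarrow> a_xx t (xs t) - a_xx 0 x0) (at_right 0)"
    using tendsto_diff[OF T1 T0] by (simp add: diff_divide_distrib)
  have Tzero: "((\<lambda>k. (Z (\<sigma> * k) t - Z (\<sigma> * k) 0) / (\<sigma> * k)) \<longlongrightarrow> 0) (at_right 0)"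
    unfolding tendsto_iff
  proof (intro allI impI)
    fix e :: real assume e: "e > 0"
    then obtain \<delta> where \<delta>: "\<delta> > 0" "\<forall>h. \<bar>h\<bar> < \<delta> \<longrightarrow> (\<forall>s\<in>{0..T}. xs s + h * exp (I s) \<in> {-pi..pi}) \<longrightarrow>
      \<bar>Z h t - Z h 0\<bar> \<le> e / 2 * \<bar>h\<bar>" using est[of "e / 2"] by auto
    have "min h0 \<delta> > 0" using \<delta> \<sigma> by simp
    from eventually_at_right_real[OF this]
    show "\<forall>\<^sub>F k in at_right 0. dist ((Z (\<sigma> * k) t - Z (\<sigma> * k) 0) / (\<sigma> * k)) 0 < e"
    proof eventually_elim
      case (elim k)
      then have k: "0 < k" "k < h0" "k < \<delta>" by auto
      have hk: "\<bar>\<sigma> * k\<bar> = k" using \<sigma>abs k by (simp add: abs_mult)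
      have Yk: "\<forall>s\<in>{0..T}. xs s + (\<sigma> * k) * exp (I s) \<in> {-pi..pi}" using \<sigma>(3) k by auto
      have "\<bar>Z (\<sigma> * k) t - Z (\<sigma> * k) 0\<bar> \<le> e / 2 * \<bar>\<sigma> * k\<bar>"
        by (rule \<delta>(2)[rule_format]) (use hk k Yk in auto)
      then have "\<bar>Z (\<sigma> * k) t - Z (\<sigma> * k) 0\<bar> \<le> e / 2 * k" using hk by simp
      then have "\<bar>(Z (\<sigma> * k) t - Z (\<sigma> * k) 0) / (\<sigma> * k)\<bar> \<le> e / 2"
        using k hk by (simp add: abs_divide field_simps)
      then show ?case unfolding dist_real_def diff_zero using e by linarith
    qed
  qed
  have "a_xx t (xs t) - a_xx 0 x0 = 0"
    by (rule tendsto_unique[OF _ Tdiff Tzero]) simp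
  then show ?thesis by simp
qed

end

end

theorem lemma2p5:
  fixes a a_t a_x a_xx :: "real \<Rightarrow> real \<Rightarrow> real"
    and T x0 :: real and xs :: "real \<Rightarrow> real"
  assumes T: "T > 0"
    and C2: "C2_on a a_t a_x a_xx (rect T)"
    and pde: "\<forall>t\<in>{0..T}. \<forall>x\<in>{-pi..pi}.
        a_t t x + integral {-pi..x} (a t) * a_x t x - (a t x)^2
          + (1/pi) * integral {-pi..pi} (\<lambda>y. (a t y)^2) = 0"
    and mean0: "\<forall>t\<in>{0..T}. integral {-pi..pi} (a t) = 0"
    and x0: "x0 \<in> {-pi..pi}"
    and crit: "a_x 0 x0 = 0"
    and char_range: "\<forall>t\<in>{0..T}. xs t \<in> {-pi..pi}"
    and char_init: "xs 0 = x0"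
    and char_ode: "\<forall>t\<in>{0..T}.
        (xs has_real_derivative integral {-pi..xs t} (a t)) (at t within {0..T})"
  shows "\<forall>t\<in>{0..T}. a_xx t (xs t) = a_xx 0 x0"
proof -
  obtain a_tt a_tx a_xt where
    Da: "\<forall>p\<in>rect T. ((\<lambda>q. a (fst q) (snd q)) has_derivative
        (\<lambda>h. a_t (fst p) (snd p) * fst h + a_x (fst p) (snd p) * snd h)) (at p within rect T)"
    and Dt: "\<forall>p\<in>rect T. ((\<lambda>q. a_t (fst q) (snd q)) has_derivative
        (\<lambda>h. a_tt (fst p) (snd p) * fst h + a_tx (fst p) (snd p) * snd h)) (at p within rect T)"
    and Dx: "\<forall>p\<in>rect T. ((\<lambda>q. a_x (fst q) (snd q)) has_derivative
        (\<lambda>h. a_xt (fst p) (snd p) * fst h + a_xx (fst p) (snd p) * snd h)) (at p within rect T)"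
    and ctx: "continuous_on (rect T) (\<lambda>q. a_tx (fst q) (snd q))"
    and cxt: "continuous_on (rect T) (\<lambda>q. a_xt (fst q) (snd q))"
    and cxx: "continuous_on (rect T) (\<lambda>q. a_xx (fst q) (snd q))"
    using C2 unfolding C2_on_def by blast
  show ?thesis
    using main_step[OF T Da Dt Dx ctx cxt cxx pde mean0 x0 crit char_range char_init char_ode] by blast
qed

end
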